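(* Let $n,d,T$ be positive integers and let $\mathbf{s}_1,\dots,\mathbf{s}_T\in\mathbb{R}^n$ be fixed vectors. For an invertible matrix $\mathbf{A}\in\mathbb{R}^{n\times n}$, set $\mathbf{x}_t=\mathbf{A}\mathbf{s}_t$ for $t=1,\dots,T$, and define $$\widehat{\mathbf{M}}_d(\mathbf{A})=\frac{1}{T}\sum_{t=1}^T [\mathbf{x}_t]_d[\mathbf{x}_t]_d^{\top},\qquad \theta_t(\mathbf{A})=[\mathbf{x}_t]_d^{\top}\big(\widehat{\mathbf{M}}_d(\mathbf{A})\big)^{-1}[\mathbf{x}_t]_d,\quad t=1,\dots,T.$$ Assume that $\widehat{\mathbf{M}}_d(\mathbf{I}_n)=\frac{1}{T}\sum_{t=1}^T[\mathbf{s}_t]_d[\mathbf{s}_t]_d^{\top}$ is invertible. Then the scores $(\theta_t(\mathbf{A}))_{t=1}^T$ take values independent of $\mathbf{A}$: for every invertible $\mathbf{A}\in\mathbb{R}^{n\times n}$, $\widehat{\mathbf{M}}_d(\mathbf{A})$ is invertible and $\theta_t(\mathbf{A})=\theta_t(\mathbf{I}_n)=[\mathbf{s}_t]_d^{\top}\big(\widehat{\mathbf{M}}_d(\mathbf{I}_n)\big)^{-1}[\mathbf{s}_t]_d$ for all $t\in\{1,\dots,T\}$.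
   Context: For $\mathbf{x}=(x_1,\dots,x_n)^{\top}\in\mathbb{R}^n$ and $d\in\mathbb{N}$, $[\mathbf{x}]_d$ denotes the column vector of all monomials $x_1^{\alpha_1}\cdots x_n^{\alpha_n}$ of total degree $\alpha_1+\dots+\alpha_n\le d$ (listed in a fixed order), which is a basis of the polynomials in $\mathbf{x}$ of degree at most $d$; its length is $\binom{n+d}{n}$. $\mathbf{I}_n$ is the $n\times n$ identity matrix. *)

theory Defs
  imports "Jordan_Normal_Form.Matrix"
begin

definition monomial_exps :: "nat \<Rightarrow> nat \<Rightarrow> (nat \<Rightarrow> nat) set" where
  "monomial_exps n d = {\<alpha>. (\<forall>i\<ge>n. \<alpha> i = 0) \<and> (\<Sum>i<n. \<alpha> i) \<le> d}"

definition mono_list :: "nat \<Rightarrow> nat \<Rightarrow> (nat \<Rightarrow> nat) list" where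
  "mono_list n d = (SOME L. distinct L \<and> set L = monomial_exps n d)"

definition monvec :: "nat \<Rightarrow> nat \<Rightarrow> real vec \<Rightarrow> real vec" where
  "monvec n d x = vec (length (mono_list n d))
     (\<lambda>k. \<Prod>i<n. (x $ i) ^ ((mono_list n d ! k) i))"

definition Mhat :: "nat \<Rightarrow> nat \<Rightarrow> nat \<Rightarrow> (nat \<Rightarrow> real vec) \<Rightarrow> real mat \<Rightarrow> real mat" where
  "Mhat n d T s A = (let N = length (mono_list n d) in
     mat N N (\<lambda>(i, j). (1 / real T) *
       (\<Sum>t\<in>{1..T}. monvec n d (A *\<^sub>v s t) $ i * monvec n d (A *\<^sub>v s t) $ j)))"

definition mat_inv :: "real mat \<Rightarrow> real mat" where
  "mat_inv M = (SOME B. B \<in> carrier_mat (dim_row M) (dim_row M) \<and> inverts_mat M B \<and> inverts_mat B M)"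

definition theta :: "nat \<Rightarrow> nat \<Rightarrow> nat \<Rightarrow> (nat \<Rightarrow> real vec) \<Rightarrow> real mat \<Rightarrow> nat \<Rightarrow> real" where
  "theta n d T s A t = monvec n d (A *\<^sub>v s t) \<bullet> (mat_inv (Mhat n d T s A) *\<^sub>v monvec n d (A *\<^sub>v s t))"

end

theory Submission
  imports Defs "Jordan_Normal_Form.Determinant"
begin


definition mnm :: "nat \<Rightarrow> (nat \<Rightarrow> nat) \<Rightarrow> real vec \<Rightarrow> real" where
  "mnm n \<beta> x = (\<Prod>i<n. (x $ i) ^ \<beta> i)"

definition ispoly :: "nat \<Rightarrow> nat \<Rightarrow> (real vec \<Rightarrow> real) \<Rightarrow> bool" where
  "ispoly n d f \<longleftrightarrow> (\<exists>c. \<forall>x. f x = (\<Sum>\<beta>\<in>monomial_exps n d. c \<beta> * mnm n \<beta> x))"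

lemma finite_E: "finite (monomial_exps n d)"
proof -
  have "monomial_exps n d \<subseteq> {f. \<forall>x. (x \<in> {..<n} \<longrightarrow> f x \<in> {..d}) \<and> (x \<notin> {..<n} \<longrightarrow> f x = 0)}"
  proof
    fix f assume f: "f \<in> monomial_exps n d"
    have "f x \<le> d" if "x < n" for x
    proof -
      have "f x \<le> (\<Sum>i<n. f i)" using that by (intro member_le_sum) auto
      then show ?thesis using f by (auto simp: monomial_exps_def)
    qed
    then show "f \<in> {f. \<forall>x. (x \<in> {..<n} \<longrightarrow> f x \<in> {..d}) \<and> (x \<notin> {..<n} \<longrightarrow> f x = 0)}"
      using f by (auto simp: monomial_exps_def)
  qed
  then show ?thesis by (rule finite_subset) (intro finite_set_of_finite_funs; simp)
qed

lemma E_mono: "a \<le> b \<Longrightarrow> monomial_exps n a \<subseteq> monomial_exps n b"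
  by (auto simp: monomial_exps_def)

lemma E_add: "\<beta> \<in> monomial_exps n a \<Longrightarrow> \<gamma> \<in> monomial_exps n b \<Longrightarrow> (\<lambda>i. \<beta> i + \<gamma> i) \<in> monomial_exps n (a + b)"
  by (auto simp: monomial_exps_def sum.distrib)

lemma mnm_add: "mnm n (\<lambda>i. \<beta> i + \<gamma> i) x = mnm n \<beta> x * mnm n \<gamma> x"
  by (simp add: mnm_def power_add prod.distrib)

lemma ispoly_mono: assumes "ispoly n a f" "a \<le> b" shows "ispoly n b f"
proof -
  obtain c where c: "\<And>x. f x = (\<Sum>\<beta>\<in>monomial_exps n a. c \<beta> * mnm n \<beta> x)"
    using assms(1) by (auto simp: ispoly_def)
  define c' where "c' = (\<lambda>\<beta>. if \<beta> \<in> monomial_exps n a then c \<beta> else 0)"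
  have "f x = (\<Sum>\<beta>\<in>monomial_exps n b. c' \<beta> * mnm n \<beta> x)" for x
    unfolding c c'_def using E_mono[OF assms(2)] finite_E
    by (intro sum.mono_neutral_cong_left) auto
  then show ?thesis unfolding ispoly_def by blast
qed

lemma ispoly_add: assumes "ispoly n d f" "ispoly n d g" shows "ispoly n d (\<lambda>x. f x + g x)"
proof -
  obtain c where c: "\<And>x. f x = (\<Sum>\<beta>\<in>monomial_exps n d. c \<beta> * mnm n \<beta> x)"
    using assms(1) by (auto simp: ispoly_def)
  obtain e where e: "\<And>x. g x = (\<Sum>\<beta>\<in>monomial_exps n d. e \<beta> * mnm n \<beta> x)"
    using assms(2) by (auto simp: ispoly_def)
  define c' where "c' = (\<lambda>\<beta>. c \<beta> + e \<beta>)"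
  have "f x + g x = (\<Sum>\<beta>\<in>monomial_exps n d. c' \<beta> * mnm n \<beta> x)" for x
    unfolding c e c'_def by (simp add: sum.distrib distrib_right)
  then show ?thesis unfolding ispoly_def by blast
qed

lemma ispoly_scale: assumes "ispoly n d f" shows "ispoly n d (\<lambda>x. a * f x)"
proof -
  obtain c where c: "\<And>x. f x = (\<Sum>\<beta>\<in>monomial_exps n d. c \<beta> * mnm n \<beta> x)"
    using assms(1) by (auto simp: ispoly_def)
  define c' where "c' = (\<lambda>\<beta>. a * c \<beta>)"
  have "a * f x = (\<Sum>\<beta>\<in>monomial_exps n d. c' \<beta> * mnm n \<beta> x)" for x
    unfolding c c'_def by (simp add: sum_distrib_left mult.assoc)
  then show ?thesis unfolding ispoly_def by blast
qed

lemma ispoly_zero: "ispoly n d (\<lambda>x. 0)"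
  unfolding ispoly_def by (rule exI[of _ "\<lambda>_. 0"]) simp

lemma ispoly_sum: "finite J \<Longrightarrow> (\<And>j. j \<in> J \<Longrightarrow> ispoly n d (F j)) \<Longrightarrow> ispoly n d (\<lambda>x. \<Sum>j\<in>J. F j x)"
  by (induction J rule: finite_induct) (auto intro: ispoly_add ispoly_zero)

lemma ispoly_mon: assumes "\<beta> \<in> monomial_exps n d" shows "ispoly n d (mnm n \<beta>)"
proof -
  define c' where "c' = (\<lambda>\<gamma>. if \<gamma> = \<beta> then 1 else (0::real))"
  have "mnm n \<beta> x = (\<Sum>\<gamma>\<in>monomial_exps n d. c' \<gamma> * mnm n \<gamma> x)" for x
  proof -
    have "(\<Sum>\<gamma>\<in>monomial_exps n d. c' \<gamma> * mnm n \<gamma> x) = (\<Sum>\<gamma>\<in>monomial_exps n d. if \<gamma> = \<beta> then mnm n \<gamma> x else 0)"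
      by (rule sum.cong) (auto simp: c'_def)
    then show ?thesis using assms finite_E by (simp add: sum.delta')
  qed
  then show ?thesis unfolding ispoly_def by blast
qed

lemma ispoly_one: "ispoly n 0 (\<lambda>x. 1)"
proof -
  have "(\<lambda>i. 0::nat) \<in> monomial_exps n 0" by (simp add: monomial_exps_def)
  from ispoly_mon[OF this] have "ispoly n 0 (\<lambda>x. mnm n (\<lambda>i. 0) x)" by simp
  then show ?thesis by (simp add: mnm_def)
qed

lemma ispoly_mult: assumes "ispoly n a f" "ispoly n b g" shows "ispoly n (a + b) (\<lambda>x. f x * g x)"
proof -
  obtain c where c: "\<And>x. f x = (\<Sum>\<beta>\<in>monomial_exps n a. c \<beta> * mnm n \<beta> x)"
    using assms(1) by (auto simp: ispoly_def)
  obtain e where e: "\<And>x. g x = (\<Sum>\<beta>\<in>monomial_exps n b. e \<beta> * mnm n \<beta> x)"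
    using assms(2) by (auto simp: ispoly_def)
  define P where "P = monomial_exps n a \<times> monomial_exps n b"
  define h where "h = (\<lambda>p::(nat\<Rightarrow>nat)\<times>(nat\<Rightarrow>nat). \<lambda>i. fst p i + snd p i)"
  define k where "k = (\<lambda>\<delta>. \<Sum>p\<in>{p\<in>P. h p = \<delta>}. c (fst p) * e (snd p))"
  have fP: "finite P" unfolding P_def using finite_E by simp
  have hP: "h ` P \<subseteq> monomial_exps n (a + b)" unfolding P_def h_def using E_add by force
  have "f x * g x = (\<Sum>\<delta>\<in>monomial_exps n (a+b). k \<delta> * mnm n \<delta> x)" for x
  proof -
    have "f x * g x = (\<Sum>p\<in>P. c (fst p) * e (snd p) * mnm n (h p) x)"
      unfolding c e P_def h_def sum_product sum.cartesian_product
      by (intro sum.cong refl) (auto simp: mnm_add)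
    also have "\<dots> = (\<Sum>\<delta>\<in>h ` P. \<Sum>p\<in>{p\<in>P. h p = \<delta>}. c (fst p) * e (snd p) * mnm n (h p) x)"
      using fP by (rule sum.image_gen)
    also have "\<dots> = (\<Sum>\<delta>\<in>h ` P. k \<delta> * mnm n \<delta> x)"
      unfolding k_def sum_distrib_right by (intro sum.cong refl) auto
    also have "\<dots> = (\<Sum>\<delta>\<in>monomial_exps n (a+b). k \<delta> * mnm n \<delta> x)"
    proof (rule sum.mono_neutral_left)
      show "\<forall>i\<in>monomial_exps n (a + b) - h ` P. k i * mnm n i x = 0"
      proof
        fix i assume "i \<in> monomial_exps n (a + b) - h ` P"
        then have "{p\<in>P. h p = i} = {}" by auto
        then have "k i = 0" unfolding k_def by (metis sum.empty)
        then show "k i * mnm n i x = 0" by simp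
      qed
    qed (use hP finite_E in auto)
    finally show ?thesis .
  qed
  then show ?thesis unfolding ispoly_def by blast
qed

lemma ispoly_power: "ispoly n a f \<Longrightarrow> ispoly n (a * k) (\<lambda>x. f x ^ k)"
proof (induction k)
  case 0 then show ?case using ispoly_one by simp
next
  case (Suc k)
  from ispoly_mult[OF Suc.prems Suc.IH[OF Suc.prems]] show ?case by (simp add: add.commute)
qed

lemma ispoly_prod: fixes m :: nat shows "(\<And>i. i < m \<Longrightarrow> ispoly n (dg i) (F i)) \<Longrightarrow> ispoly n (\<Sum>i<m. dg i) (\<lambda>x. \<Prod>i<m. F i x)"
proof (induction m)
  case 0 then show ?case using ispoly_one by simp
next
  case (Suc m)
  have "ispoly n ((\<Sum>i<m. dg i) + dg m) (\<lambda>x. (\<Prod>i<m. F i x) * F m x)"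
    using Suc by (intro ispoly_mult) auto
  then show ?case by simp
qed

lemma ispoly_coord: assumes "j < n" shows "ispoly n 1 (\<lambda>x. x $ j)"
proof -
  let ?u = "\<lambda>i. if i = j then 1 else (0::nat)"
  have "?u \<in> monomial_exps n 1" using assms by (auto simp: monomial_exps_def)
  moreover have "mnm n ?u x = x $ j" for x
  proof -
    have "(\<Prod>i<n. x$i ^ ?u i) = (\<Prod>i<n. if i = j then x$i else 1)" by (rule prod.cong) auto
    then show ?thesis unfolding mnm_def using assms by simp
  qed
  ultimately have "ispoly n 1 (mnm n ?u)" "mnm n ?u = (\<lambda>x. x $ j)" using ispoly_mon by auto
  then show ?thesis by simp
qed

lemma ispoly_lin: "ispoly n 1 (\<lambda>x. \<Sum>j<n. a j * x $ j)"
  by (intro ispoly_sum ispoly_scale ispoly_coord) auto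

lemma ispoly_main: assumes "\<alpha> \<in> monomial_exps n d"
  shows "ispoly n d (\<lambda>x. \<Prod>i<n. (\<Sum>j<n. A i j * x $ j) ^ \<alpha> i)"
proof -
  have "ispoly n (\<Sum>i<n. 1 * \<alpha> i) (\<lambda>x. \<Prod>i<n. (\<Sum>j<n. A i j * x $ j) ^ \<alpha> i)"
    by (intro ispoly_prod ispoly_power ispoly_lin)
  then show ?thesis using assms by (auto simp: monomial_exps_def intro: ispoly_mono)
qed



lemma ml_props: "distinct (mono_list n d) \<and> set (mono_list n d) = monomial_exps n d"
proof -
  have "\<exists>L. distinct L \<and> set L = monomial_exps n d"
    using finite_distinct_list[OF finite_E] by metis
  then show ?thesis unfolding mono_list_def by (rule someI_ex)
qed

lemma monvec_dim[simp]: "monvec n d x \<in> carrier_vec (length (mono_list n d))"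
  by (simp add: monvec_def)

lemma lin_transform:
  fixes A :: "real mat"
  assumes A: "A \<in> carrier_mat n n"
  shows "\<exists>L \<in> carrier_mat (length (mono_list n d)) (length (mono_list n d)).
           \<forall>x\<in>carrier_vec n. monvec n d (A *\<^sub>v x) = L *\<^sub>v monvec n d x"
proof -
  let ?ml = "mono_list n d"
  let ?N = "length ?ml"
  have dist: "distinct ?ml" and setml: "set ?ml = monomial_exps n d" using ml_props by auto
  have "\<forall>k. \<exists>c. k < ?N \<longrightarrow> (\<forall>x. (\<Prod>i<n. (\<Sum>j<n. A$$(i,j) * x$j) ^ (?ml!k) i)
           = (\<Sum>\<beta>\<in>monomial_exps n d. c \<beta> * mnm n \<beta> x))"
  proof
    fix k
    show "\<exists>c. k < ?N \<longrightarrow> (\<forall>x. (\<Prod>i<n. (\<Sum>j<n. A$$(i,j) * x$j) ^ (?ml!k) i)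
           = (\<Sum>\<beta>\<in>monomial_exps n d. c \<beta> * mnm n \<beta> x))"
    proof (cases "k < ?N")
      case True
      then have "?ml ! k \<in> monomial_exps n d" using setml nth_mem by metis
      from ispoly_main[OF this, of "\<lambda>i j. A$$(i,j)"] show ?thesis by (simp add: ispoly_def True)
    qed simp
  qed
  then have "\<exists>C. \<forall>k. k < ?N \<longrightarrow> (\<forall>x. (\<Prod>i<n. (\<Sum>j<n. A$$(i,j) * x$j) ^ (?ml!k) i)
           = (\<Sum>\<beta>\<in>monomial_exps n d. C k \<beta> * mnm n \<beta> x))" by (rule choice)
  then obtain C where C0: "\<forall>k. k < ?N \<longrightarrow> (\<forall>x. (\<Prod>i<n. (\<Sum>j<n. A$$(i,j) * x$j) ^ (?ml!k) i)
           = (\<Sum>\<beta>\<in>monomial_exps n d. C k \<beta> * mnm n \<beta> x))" by (elim exE)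
  have C: "\<And>k x. k < ?N \<Longrightarrow> (\<Prod>i<n. (\<Sum>j<n. A$$(i,j) * x$j) ^ (?ml!k) i)
           = (\<Sum>\<beta>\<in>monomial_exps n d. C k \<beta> * mnm n \<beta> x)" using C0 by blast
  define L where "L = mat ?N ?N (\<lambda>(k,j). C k (?ml!j))"
  have "\<forall>x\<in>carrier_vec n. monvec n d (A *\<^sub>v x) = L *\<^sub>v monvec n d x"
  proof
    fix x :: "real vec" assume x: "x \<in> carrier_vec n"
    show "monvec n d (A *\<^sub>v x) = L *\<^sub>v monvec n d x"
    proof (rule eq_vecI)
      show "dim_vec (monvec n d (A *\<^sub>v x)) = dim_vec (L *\<^sub>v monvec n d x)"
        by (simp add: monvec_def L_def)
      fix k assume "k < dim_vec (L *\<^sub>v monvec n d x)"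
      then have k: "k < ?N" by (simp add: L_def)
      have "monvec n d (A *\<^sub>v x) $ k = (\<Prod>i<n. (A *\<^sub>v x) $ i ^ (?ml!k) i)"
        using k by (simp add: monvec_def)
      also have "\<dots> = (\<Prod>i<n. (\<Sum>j<n. A$$(i,j) * x$j) ^ (?ml!k) i)"
      proof (rule prod.cong[OF refl])
        fix i assume "i \<in> {..<n}"
        then have i: "i < n" by simp
        have "(A *\<^sub>v x) $ i = row A i \<bullet> x" using A i by simp
        also have "\<dots> = (\<Sum>j\<in>{0..<n}. row A i $ j * x $ j)" using x by (simp add: scalar_prod_def)
        also have "\<dots> = (\<Sum>j<n. A$$(i,j) * x$j)"
          unfolding atLeast0LessThan using A i by (intro sum.cong refl) simp
        finally have "(A *\<^sub>v x) $ i = (\<Sum>j<n. A$$(i,j) * x$j)" .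
        then show "(A *\<^sub>v x) $ i ^ (?ml!k) i = (\<Sum>j<n. A$$(i,j) * x$j) ^ (?ml!k) i" by simp
      qed
      also have "\<dots> = (\<Sum>\<beta>\<in>monomial_exps n d. C k \<beta> * mnm n \<beta> x)" using C[OF k] .
      also have "\<dots> = (\<Sum>j<?N. C k (?ml!j) * mnm n (?ml!j) x)"
        using sum.reindex_bij_betw[OF bij_betw_nth[OF dist refl setml[symmetric]],
            of "\<lambda>\<beta>. C k \<beta> * mnm n \<beta> x"] by simp
      also have "\<dots> = (\<Sum>j\<in>{0..<?N}. row L k $ j * monvec n d x $ j)"
        unfolding atLeast0LessThan using k by (intro sum.cong refl) (simp add: L_def monvec_def mnm_def)
      also have "\<dots> = (L *\<^sub>v monvec n d x) $ k"
        using k by (simp add: L_def scalar_prod_def monvec_def)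
      finally show "monvec n d (A *\<^sub>v x) $ k = (L *\<^sub>v monvec n d x) $ k" .
    qed
  qed
  moreover have "L \<in> carrier_mat ?N ?N" by (simp add: L_def)
  ultimately show ?thesis by blast
qed



lemma mat_inv_unique:
  fixes M Q :: "real mat"
  assumes M: "M \<in> carrier_mat N N" and Q: "Q \<in> carrier_mat N N" and MQ: "M * Q = 1\<^sub>m N"
  shows "mat_inv M = Q"
proof -
  have QM: "Q * M = 1\<^sub>m N" by (rule mat_mult_left_right_inverse[OF M Q MQ])
  have ex: "\<exists>B. B \<in> carrier_mat (dim_row M) (dim_row M) \<and> inverts_mat M B \<and> inverts_mat B M"
    using M Q MQ QM by (intro exI[of _ Q]) (auto simp: inverts_mat_def)
  define B where "B = mat_inv M"
  have B: "B \<in> carrier_mat N N" "M * B = 1\<^sub>m N" "B * M = 1\<^sub>m N"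
    using someI_ex[OF ex] M unfolding B_def mat_inv_def inverts_mat_def by auto
  have "Q = (B * M) * Q" using B Q by simp
  also have "\<dots> = B * (M * Q)" by (rule assoc_mult_mat[OF B(1) M Q])
  also have "\<dots> = B" using B by (simp add: MQ)
  finally show ?thesis unfolding B_def by simp
qed

definition Vm :: "nat \<Rightarrow> nat \<Rightarrow> nat \<Rightarrow> (nat \<Rightarrow> real vec) \<Rightarrow> real mat" where
  "Vm n d T s = mat (length (mono_list n d)) T (\<lambda>(i,k). monvec n d (s (Suc k)) $ i)"

lemma Vm_carrier: "Vm n d T s \<in> carrier_mat (length (mono_list n d)) T"
  by (simp add: Vm_def)

lemma col_Vm: "k < T \<Longrightarrow> col (Vm n d T s) k = monvec n d (s (Suc k))"
  by (intro eq_vecI) (auto simp: Vm_def monvec_def)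

lemma Mhat_V:
  fixes A L :: "real mat"
  assumes s: "\<And>t. t \<in> {1..T} \<Longrightarrow> s t \<in> carrier_vec n"
    and A: "A \<in> carrier_mat n n"
    and L: "L \<in> carrier_mat (length (mono_list n d)) (length (mono_list n d))"
    and hL: "\<forall>x\<in>carrier_vec n. monvec n d (A *\<^sub>v x) = L *\<^sub>v monvec n d x"
  shows "Mhat n d T s A = (1 / real T) \<cdot>\<^sub>m ((L * Vm n d T s) * transpose_mat (L * Vm n d T s))"
proof -
  let ?N = "length (mono_list n d)"
  let ?V = "Vm n d T s"
  let ?W = "L * ?V"
  have W: "?W \<in> carrier_mat ?N T" using L Vm_carrier by auto
  have dW: "dim_row ?W = ?N" "dim_col ?W = T" using W by auto
  have Wik: "?W $$ (i, k) = monvec n d (A *\<^sub>v s (Suc k)) $ i" if "i < ?N" "k < T" for i k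
  proof -
    have "?W $$ (i, k) = row L i \<bullet> col ?V k"
      by (rule index_mult_mat) (use that L in \<open>auto simp: Vm_def\<close>)
    also have "\<dots> = (L *\<^sub>v monvec n d (s (Suc k))) $ i" using that L by (simp add: col_Vm)
    also have "\<dots> = monvec n d (A *\<^sub>v s (Suc k)) $ i" using hL s[of "Suc k"] that by simp
    finally show ?thesis .
  qed
  show ?thesis
  proof (rule eq_matI)
    fix i j assume i: "i < dim_row ((1 / real T) \<cdot>\<^sub>m (?W * transpose_mat ?W))"
      and j: "j < dim_col ((1 / real T) \<cdot>\<^sub>m (?W * transpose_mat ?W))"
    then have i: "i < ?N" and j: "j < ?N" using W by auto
    have "((1 / real T) \<cdot>\<^sub>m (?W * transpose_mat ?W)) $$ (i, j)
        = (1 / real T) * (\<Sum>k\<in>{0..<T}. ?W $$ (i,k) * ?W $$ (j,k))"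
      using i j dW by (simp add: scalar_prod_def)
    also have "\<dots> = (1 / real T) * (\<Sum>k<T. monvec n d (A *\<^sub>v s (Suc k)) $ i * monvec n d (A *\<^sub>v s (Suc k)) $ j)"
      unfolding atLeast0LessThan using i j by (simp add: Wik)
    also have "\<dots> = (1 / real T) * (\<Sum>t\<in>{1..T}. monvec n d (A *\<^sub>v s t) $ i * monvec n d (A *\<^sub>v s t) $ j)"
      unfolding image_Suc_lessThan[symmetric] by (simp add: sum.reindex)
    also have "\<dots> = Mhat n d T s A $$ (i, j)" using i j by (simp add: Mhat_def Let_def)
    finally show "Mhat n d T s A $$ (i, j) = ((1 / real T) \<cdot>\<^sub>m (?W * transpose_mat ?W)) $$ (i, j)" by simp
  qed (use W in \<open>auto simp: Mhat_def Let_def\<close>)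
qed



lemma inv_obtain:
  fixes A :: "real mat"
  assumes A: "A \<in> carrier_mat m m" and inv: "invertible_mat A"
  shows "\<exists>B\<in>carrier_mat m m. A * B = 1\<^sub>m m \<and> B * A = 1\<^sub>m m"
proof -
  obtain B where AB: "A * B = 1\<^sub>m (dim_row A)" and BA: "B * A = 1\<^sub>m (dim_row B)"
    using inv unfolding invertible_mat_def inverts_mat_def by blast
  have "dim_col B = m" using arg_cong[OF AB, of dim_col] A by simp
  moreover have "dim_row B = m" using arg_cong[OF BA, of dim_col] A by simp
  ultimately show ?thesis using AB BA A by (intro bexI[of _ B]) auto
qed

theorem proposition1:
  fixes n d T :: nat and s :: "nat \<Rightarrow> real vec"
  assumes "n > 0" and "d > 0" and "T > 0"
    and "\<And>t. t \<in> {1..T} \<Longrightarrow> s t \<in> carrier_vec n"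
    and "invertible_mat (Mhat n d T s (1\<^sub>m n))"
  shows "\<forall>A \<in> carrier_mat n n. invertible_mat A \<longrightarrow>
           invertible_mat (Mhat n d T s A) \<and>
           (\<forall>t \<in> {1..T}. theta n d T s A t = theta n d T s (1\<^sub>m n) t \<and>
              theta n d T s (1\<^sub>m n) t =
                monvec n d (s t) \<bullet> (mat_inv (Mhat n d T s (1\<^sub>m n)) *\<^sub>v monvec n d (s t)))"
proof -
  note s = assms(4)
  let ?N = "length (mono_list n d)"
  let ?V = "Vm n d T s"
  let ?c = "1 / real T"
  let ?M0 = "Mhat n d T s (1\<^sub>m n)"
  have V: "?V \<in> carrier_mat ?N T" by (rule Vm_carrier)
  have M0c: "?M0 \<in> carrier_mat ?N ?N" by (simp add: Mhat_def Let_def)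
  have "Mhat n d T s (1\<^sub>m n) = ?c \<cdot>\<^sub>m ((1\<^sub>m ?N * ?V) * transpose_mat (1\<^sub>m ?N * ?V))"
    by (rule Mhat_V[OF s]) auto
  then have M0eq: "?M0 = ?c \<cdot>\<^sub>m (?V * transpose_mat ?V)" using V by simp
  obtain M0i where M0i: "M0i \<in> carrier_mat ?N ?N" "?M0 * M0i = 1\<^sub>m ?N" "M0i * ?M0 = 1\<^sub>m ?N"
    using inv_obtain[OF M0c assms(5)] by blast
  have invM0: "mat_inv ?M0 = M0i" by (rule mat_inv_unique[OF M0c M0i(1,2)])
  show ?thesis
  proof (intro ballI impI)
    fix A :: "real mat" assume A: "A \<in> carrier_mat n n" and invA: "invertible_mat A"
    obtain B where B: "B \<in> carrier_mat n n" "A * B = 1\<^sub>m n" "B * A = 1\<^sub>m n"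
      using inv_obtain[OF A invA] by blast
    obtain L where L: "L \<in> carrier_mat ?N ?N" and hL: "\<forall>x\<in>carrier_vec n. monvec n d (A *\<^sub>v x) = L *\<^sub>v monvec n d x"
      using lin_transform[OF A] by blast
    obtain L' where L': "L' \<in> carrier_mat ?N ?N" and hL': "\<forall>x\<in>carrier_vec n. monvec n d (B *\<^sub>v x) = L' *\<^sub>v monvec n d x"
      using lin_transform[OF B(1)] by blast
    have bk: "L' *\<^sub>v (L *\<^sub>v monvec n d x) = monvec n d x" if x: "x \<in> carrier_vec n" for x
    proof -
      have "L' *\<^sub>v (L *\<^sub>v monvec n d x) = L' *\<^sub>v monvec n d (A *\<^sub>v x)" using hL x by simp
      also have "\<dots> = monvec n d (B *\<^sub>v (A *\<^sub>v x))" using hL' x A by simp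
      also have "B *\<^sub>v (A *\<^sub>v x) = (B * A) *\<^sub>v x" using A B x by (intro assoc_mult_mat_vec[symmetric]) auto
      also have "\<dots> = x" using B x by simp
      finally show ?thesis .
    qed
    have PV: "(L' * L) * ?V = ?V"
    proof (rule eq_matI)
      fix i k assume "i < dim_row ?V" "k < dim_col ?V"
      then have i: "i < ?N" and k: "k < T" using V by auto
      have "((L' * L) * ?V) $$ (i, k) = row (L' * L) i \<bullet> col ?V k"
        by (rule index_mult_mat) (use i k L L' V in auto)
      also have "\<dots> = ((L' * L) *\<^sub>v monvec n d (s (Suc k))) $ i"
      proof -
        have "((L' * L) *\<^sub>v monvec n d (s (Suc k))) $ i = row (L' * L) i \<bullet> monvec n d (s (Suc k))"
          by (rule index_mult_mat_vec) (use i L L' in auto)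
        then show ?thesis by (simp only: col_Vm[OF k])
      qed
      also have "(L' * L) *\<^sub>v monvec n d (s (Suc k)) = L' *\<^sub>v (L *\<^sub>v monvec n d (s (Suc k)))"
        using L L' by (intro assoc_mult_mat_vec) auto
      also have "\<dots> = monvec n d (s (Suc k))" using bk s[of "Suc k"] k by simp
      also have "monvec n d (s (Suc k)) $ i = ?V $$ (i, k)" using i k by (simp add: Vm_def)
      finally show "((L' * L) * ?V) $$ (i, k) = ?V $$ (i, k)" .
    qed (use L L' V in auto)
    have PM0: "(L' * L) * ?M0 = ?M0"
    proof -
      have "(L' * L) * ?M0 = ?c \<cdot>\<^sub>m ((L' * L) * (?V * transpose_mat ?V))"
        unfolding M0eq using L L' V by (intro mult_smult_distrib) auto
      also have "(L' * L) * (?V * transpose_mat ?V) = ((L' * L) * ?V) * transpose_mat ?V"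
        using L L' V by (intro assoc_mult_mat[symmetric]) auto
      finally show ?thesis unfolding PV M0eq .
    qed
    have P1: "L' * L = 1\<^sub>m ?N"
    proof -
      have "L' * L = (L' * L) * (?M0 * M0i)" using L L' by (simp add: M0i)
      also have "\<dots> = ((L' * L) * ?M0) * M0i" using L L' M0c M0i by (intro assoc_mult_mat[symmetric]) auto
      also have "\<dots> = 1\<^sub>m ?N" unfolding PM0 by (rule M0i(2))
      finally show ?thesis .
    qed
    have LL': "L * L' = 1\<^sub>m ?N" by (rule mat_mult_left_right_inverse[OF L' L P1])
    have LT: "transpose_mat L * transpose_mat L' = 1\<^sub>m ?N"
      using transpose_mult[OF L' L] P1 by simp
    define MA where "MA = Mhat n d T s A"
    have "MA = ?c \<cdot>\<^sub>m ((L * ?V) * transpose_mat (L * ?V))"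
      unfolding MA_def by (rule Mhat_V[OF s A L hL])
    also have "(L * ?V) * transpose_mat (L * ?V) = (L * ?V) * (transpose_mat ?V * transpose_mat L)"
      using transpose_mult[OF L V] by simp
    also have "\<dots> = L * (?V * (transpose_mat ?V * transpose_mat L))"
      using L V by (intro assoc_mult_mat[of L ?N ?N ?V T _ ?N]) auto
    also have "?V * (transpose_mat ?V * transpose_mat L) = (?V * transpose_mat ?V) * transpose_mat L"
      using L V by (intro assoc_mult_mat[symmetric, of ?V ?N T _ ?N _ ?N]) auto
    also have "?c \<cdot>\<^sub>m (L * ((?V * transpose_mat ?V) * transpose_mat L)) = L * (?M0 * transpose_mat L)"
    proof -
      have X: "?V * transpose_mat ?V \<in> carrier_mat ?N ?N" using V by simp
      have LT: "transpose_mat L \<in> carrier_mat ?N ?N" using L by simp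
      have e1: "(?c \<cdot>\<^sub>m (?V * transpose_mat ?V)) * transpose_mat L = ?c \<cdot>\<^sub>m ((?V * transpose_mat ?V) * transpose_mat L)"
        by (rule mult_smult_assoc_mat[OF X LT])
      have e2: "L * (?c \<cdot>\<^sub>m ((?V * transpose_mat ?V) * transpose_mat L)) = ?c \<cdot>\<^sub>m (L * ((?V * transpose_mat ?V) * transpose_mat L))"
        by (rule mult_smult_distrib[OF L mult_carrier_mat[OF X LT]])
      show ?thesis unfolding M0eq e1 e2 ..
    qed
    finally have MAeq: "MA = L * (?M0 * transpose_mat L)" .
    have MAc: "MA \<in> carrier_mat ?N ?N" unfolding MA_def by (simp add: Mhat_def Let_def)
    define Q where "Q = transpose_mat L' * (M0i * L')"
    have Qc: "Q \<in> carrier_mat ?N ?N" using L' M0i by (simp add: Q_def)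
    have "MA * Q = L * ((?M0 * transpose_mat L) * Q)"
      unfolding MAeq using L M0c Qc by (intro assoc_mult_mat) auto
    also have "(?M0 * transpose_mat L) * Q = ?M0 * (transpose_mat L * Q)"
      using L M0c Qc by (intro assoc_mult_mat) auto
    also have "transpose_mat L * Q = (transpose_mat L * transpose_mat L') * (M0i * L')"
      unfolding Q_def using L L' M0i by (intro assoc_mult_mat[symmetric]) auto
    also have "\<dots> = M0i * L'" unfolding LT using L' M0i by simp
    also have "?M0 * (M0i * L') = (?M0 * M0i) * L'"
      using L' M0i M0c by (intro assoc_mult_mat[symmetric]) auto
    also have "\<dots> = L'" using L' by (simp add: M0i)
    finally have MAQ: "MA * Q = 1\<^sub>m ?N" using LL' by simp
    have QMA: "Q * MA = 1\<^sub>m ?N" by (rule mat_mult_left_right_inverse[OF MAc Qc MAQ])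
    have invMA: "invertible_mat MA"
      unfolding invertible_mat_def inverts_mat_def using MAc Qc MAQ QMA
      by (intro conjI exI[of _ Q]) auto
    have invMAQ: "mat_inv MA = Q" by (rule mat_inv_unique[OF MAc Qc MAQ])
    have th: "theta n d T s A t = theta n d T s (1\<^sub>m n) t \<and>
              theta n d T s (1\<^sub>m n) t = monvec n d (s t) \<bullet> (mat_inv ?M0 *\<^sub>v monvec n d (s t))"
      if t: "t \<in> {1..T}" for t
    proof -
      define v where "v = monvec n d (s t)"
      define y where "y = M0i *\<^sub>v v"
      have st: "s t \<in> carrier_vec n" using s t by simp
      have vc: "v \<in> carrier_vec ?N" by (simp add: v_def)
      have yc: "y \<in> carrier_vec ?N" using M0i vc by (simp add: y_def)
      have w: "monvec n d (A *\<^sub>v s t) = L *\<^sub>v v" using hL st by (simp add: v_def)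
      have wc: "L *\<^sub>v v \<in> carrier_vec ?N" by (rule mult_mat_vec_carrier[OF L vc])
      have LLv: "L' *\<^sub>v (L *\<^sub>v v) = v" unfolding v_def by (rule bk[OF st])
      have q1: "Q *\<^sub>v (L *\<^sub>v v) = transpose_mat L' *\<^sub>v ((M0i * L') *\<^sub>v (L *\<^sub>v v))"
        unfolding Q_def by (rule assoc_mult_mat_vec[of _ ?N ?N _ ?N]) (use L' M0i wc in auto)
      have q2: "(M0i * L') *\<^sub>v (L *\<^sub>v v) = M0i *\<^sub>v (L' *\<^sub>v (L *\<^sub>v v))"
        by (rule assoc_mult_mat_vec[of _ ?N ?N _ ?N]) (use L' M0i wc in auto)
      have Qw: "Q *\<^sub>v (L *\<^sub>v v) = transpose_mat L' *\<^sub>v y"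
        unfolding q1 q2 LLv y_def ..
      have thA0: "theta n d T s A t = (L *\<^sub>v v) \<bullet> (transpose_mat L' *\<^sub>v y)"
        unfolding theta_def w MA_def[symmetric] invMAQ Qw ..
      have c1: "(L *\<^sub>v v) \<bullet> (transpose_mat L' *\<^sub>v y) = (transpose_mat L' *\<^sub>v y) \<bullet> (L *\<^sub>v v)"
        by (rule comm_scalar_prod[of _ ?N]) (use L' yc wc in auto)
      have c2: "(transpose_mat L' *\<^sub>v y) \<bullet> (L *\<^sub>v v) = y \<bullet> (L' *\<^sub>v (L *\<^sub>v v))"
        by (rule transpose_vec_mult_scalar[OF L' wc yc])
      have c3: "y \<bullet> v = v \<bullet> y" by (rule comm_scalar_prod[OF yc vc])
      have thA: "theta n d T s A t = v \<bullet> y" unfolding thA0 c1 c2 LLv c3 ..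
      have "1\<^sub>m n *\<^sub>v s t = s t" using st by simp
      then have thI: "theta n d T s (1\<^sub>m n) t = v \<bullet> y"
        unfolding theta_def y_def v_def invM0 by simp
      have thI': "monvec n d (s t) \<bullet> (mat_inv ?M0 *\<^sub>v monvec n d (s t)) = v \<bullet> y"
        unfolding y_def v_def invM0 ..
      show ?thesis using thA thI thI' by simp
    qed
    show "invertible_mat (Mhat n d T s A) \<and>
           (\<forall>t \<in> {1..T}. theta n d T s A t = theta n d T s (1\<^sub>m n) t \<and>
              theta n d T s (1\<^sub>m n) t =
                monvec n d (s t) \<bullet> (mat_inv (Mhat n d T s (1\<^sub>m n)) *\<^sub>v monvec n d (s t)))"
      using invMA th unfolding MA_def by blast
  qed
qed


end
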